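(* For all positive integers $m,n$, the cyclic simplicial rook graph $\mathcal{CSR}(m,n)$ is a Cayley graph.
   Context: For positive integers $m,n$, the cyclic simplicial rook graph $\mathcal{CSR}(m,n)$ is the graph whose vertices are the vectors $(a_1,\dots,a_m)\in\mathbb{Z}_n^m$ with $a_1+\cdots+a_m\equiv 0 \pmod n$, two vertices being adjacent if and only if their vectors differ in exactly two coordinates. For a group $\Gamma$ and a subset $S\subseteq\Gamma$ closed under inverses and not containing the identity, the Cayley graph $\mathrm{Cay}(\Gamma,S)$ has vertex set $\Gamma$, with $x,y$ adjacent iff $x^{-1}y\in S$. A graph is a Cayley graph if it is isomorphic to some $\mathrm{Cay}(\Gamma,S)$. *)

theory Defs
  imports "HOL-Algebra.Group"
begin

text \<open>Vertices of CSR(m,n): vectors (a_1,...,a_m) in Z_n^m, represented as lists of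
  naturals of length m with entries in {0..<n}, whose sum is 0 mod n.\<close>
definition CSR_verts :: "nat \<Rightarrow> nat \<Rightarrow> nat list set" where
  "CSR_verts m n = {a. length a = m \<and> (\<forall>i<m. a ! i < n) \<and> sum_list a mod n = 0}"

definition CSR_adj :: "nat list \<Rightarrow> nat list \<Rightarrow> bool" where
  "CSR_adj a b \<longleftrightarrow> card {i. i < length a \<and> a ! i \<noteq> b ! i} = 2"

definition cayley_conn :: "('a, 'b) monoid_scheme \<Rightarrow> 'a set \<Rightarrow> bool" where
  "cayley_conn G S \<longleftrightarrow> group G \<and> S \<subseteq> carrier G \<and> \<one>\<^bsub>G\<^esub> \<notin> S
     \<and> (\<forall>s\<in>S. inv\<^bsub>G\<^esub> s \<in> S)"

definition cayley_adj :: "('a, 'b) monoid_scheme \<Rightarrow> 'a set \<Rightarrow> 'a \<Rightarrow> 'a \<Rightarrow> bool" where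
  "cayley_adj G S x y \<longleftrightarrow> inv\<^bsub>G\<^esub> x \<otimes>\<^bsub>G\<^esub> y \<in> S"

definition graph_iso :: "'v set \<Rightarrow> ('v \<Rightarrow> 'v \<Rightarrow> bool) \<Rightarrow> 'w set \<Rightarrow> ('w \<Rightarrow> 'w \<Rightarrow> bool) \<Rightarrow> bool" where
  "graph_iso V E W F \<longleftrightarrow> (\<exists>f. bij_betw f V W \<and> (\<forall>x\<in>V. \<forall>y\<in>V. E x y \<longleftrightarrow> F (f x) (f y)))"

text \<open>A graph is a Cayley graph if it is isomorphic to some Cay(G,S).  The group's carrier
  is taken in the vertex type; since any group can be transported along a bijection,
  this loses no generality.\<close>
definition is_cayley_graph :: "'v set \<Rightarrow> ('v \<Rightarrow> 'v \<Rightarrow> bool) \<Rightarrow> bool" where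
  "is_cayley_graph V E \<longleftrightarrow>
     (\<exists>(G :: 'v monoid) S. cayley_conn G S \<and> graph_iso V E (carrier G) (cayley_adj G S))"

end

theory Submission
  imports Defs
begin

definition Zg :: "nat \<Rightarrow> nat \<Rightarrow> nat list monoid" where
  "Zg m n = \<lparr>carrier = CSR_verts m n,
     mult = (\<lambda>a b. map2 (\<lambda>x y. (x + y) mod n) a b),
     one = replicate m 0\<rparr>"

definition neg :: "nat \<Rightarrow> nat list \<Rightarrow> nat list" where
  "neg n a = map (\<lambda>x. (n - x) mod n) a"

lemma sum_map2_mod:
  "length (a::nat list) = length b \<Longrightarrow>
   sum_list (map2 (\<lambda>x y. (x + y) mod n) a b) mod n = (sum_list a + sum_list b) mod n"
proof (induction a b rule: list_induct2)
  case Nil then show ?case by simp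
next
  case (Cons x xs y ys)
  have "sum_list (map2 (\<lambda>x y. (x + y) mod n) (x # xs) (y # ys)) mod n
      = ((x + y) mod n + sum_list (map2 (\<lambda>x y. (x + y) mod n) xs ys)) mod n" by simp
  also have "\<dots> = ((x + y) + sum_list (map2 (\<lambda>x y. (x + y) mod n) xs ys) mod n) mod n"
    by (metis mod_add_left_eq[of "x + y" n] mod_add_right_eq[of "x + y" _ n])
  also have "\<dots> = ((x + y) + (sum_list xs + sum_list ys) mod n) mod n" using Cons by simp
  also have "\<dots> = ((x + y) + (sum_list xs + sum_list ys)) mod n"
    by (rule mod_add_right_eq)
  also have "\<dots> = (sum_list (x # xs) + sum_list (y # ys)) mod n"
    by (simp add: ac_simps)
  finally show ?case .
qed

lemma sum_neg_mod:
  "\<forall>x\<in>set a. x < n \<Longrightarrow> (sum_list (neg n a) + sum_list a) mod n = 0"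
proof (induction a)
  case Nil then show ?case by (simp add: neg_def)
next
  case (Cons x xs)
  have "(sum_list (neg n (x # xs)) + sum_list (x # xs)) mod n
     = (((n - x) mod n + x) + (sum_list (neg n xs) + sum_list xs)) mod n"
    by (simp add: neg_def algebra_simps)
  also have "\<dots> = (((n - x) mod n + x) + (sum_list (neg n xs) + sum_list xs) mod n) mod n"
    by (simp add: mod_add_right_eq)
  also have "\<dots> = ((n - x) mod n + x) mod n" using Cons by simp
  also have "\<dots> = ((n - x) + x) mod n" by (simp add: mod_add_left_eq)
  also have "\<dots> = 0" using Cons.prems by simp
  finally show ?case .
qed

lemma in_verts: "a \<in> CSR_verts m n \<longleftrightarrow> length a = m \<and> (\<forall>i<m. a ! i < n) \<and> sum_list a mod n = 0"
  by (simp add: CSR_verts_def)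

lemma set_lt: "length a = m \<Longrightarrow> \<forall>i<m. a ! i < n \<Longrightarrow> \<forall>x\<in>set a. x < n"
  by (metis in_set_conv_nth)

lemma map2_assoc:
  assumes "length (x::nat list) = m" "length y = m" "length z = m"
  shows "map2 (\<lambda>x y. (x + y) mod n) (map2 (\<lambda>x y. (x + y) mod n) x y) z
       = map2 (\<lambda>x y. (x + y) mod n) x (map2 (\<lambda>x y. (x + y) mod n) y z)"
proof (rule nth_equalityI)
  show "length (map2 (\<lambda>x y. (x + y) mod n) (map2 (\<lambda>x y. (x + y) mod n) x y) z)
       = length (map2 (\<lambda>x y. (x + y) mod n) x (map2 (\<lambda>x y. (x + y) mod n) y z))"
    using assms by simp
  fix i assume "i < length (map2 (\<lambda>x y. (x + y) mod n) (map2 (\<lambda>x y. (x + y) mod n) x y) z)"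
  then show "map2 (\<lambda>x y. (x + y) mod n) (map2 (\<lambda>x y. (x + y) mod n) x y) z ! i
       = map2 (\<lambda>x y. (x + y) mod n) x (map2 (\<lambda>x y. (x + y) mod n) y z) ! i"
    using assms by (simp add: mod_add_left_eq mod_add_right_eq add.assoc)
qed

lemma neg_cancel: "(a::nat) < n \<Longrightarrow> ((n - a) mod n + a) mod n = 0"
  by (simp add: mod_add_left_eq)

lemma neg_inv:
  assumes "length x = m" "\<forall>i<m. x ! i < n"
  shows "map2 (\<lambda>x y. (x + y) mod n) (neg n x) x = replicate m 0"
  using assms by (auto simp: neg_def neg_cancel intro!: nth_equalityI)

lemma Zg_group:
  assumes "n > 0"
  shows "group (Zg m n)"
proof (rule groupI)
  fix x y assume x: "x \<in> carrier (Zg m n)" and y: "y \<in> carrier (Zg m n)"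
  then show "x \<otimes>\<^bsub>Zg m n\<^esub> y \<in> carrier (Zg m n)"
    using assms sum_map2_mod[of x y n]
    by (auto simp: Zg_def in_verts mod_add_eq)
next
  show "\<one>\<^bsub>Zg m n\<^esub> \<in> carrier (Zg m n)"
    using assms by (simp add: Zg_def in_verts sum_list_replicate)
next
  fix x y z assume x: "x \<in> carrier (Zg m n)" and y: "y \<in> carrier (Zg m n)"
    and z: "z \<in> carrier (Zg m n)"
  show "x \<otimes>\<^bsub>Zg m n\<^esub> y \<otimes>\<^bsub>Zg m n\<^esub> z = x \<otimes>\<^bsub>Zg m n\<^esub> (y \<otimes>\<^bsub>Zg m n\<^esub> z)"
    using x y z map2_assoc[of x m y z n] by (simp add: Zg_def in_verts)
next
  fix x assume x: "x \<in> carrier (Zg m n)"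
  then show "\<one>\<^bsub>Zg m n\<^esub> \<otimes>\<^bsub>Zg m n\<^esub> x = x"
    by (auto simp: Zg_def in_verts intro!: nth_equalityI)
next
  fix x assume x: "x \<in> carrier (Zg m n)"
  have "neg n x \<in> carrier (Zg m n)"
    using x assms sum_neg_mod[of x n] set_lt[of x m n]
    by (auto simp: Zg_def in_verts neg_def) (metis dvd_add_left_iff mod_0_imp_dvd dvd_imp_mod_0)
  moreover have "neg n x \<otimes>\<^bsub>Zg m n\<^esub> x = \<one>\<^bsub>Zg m n\<^esub>"
    using x neg_inv[of x m n] by (simp add: Zg_def in_verts)
  ultimately show "\<exists>y\<in>carrier (Zg m n). y \<otimes>\<^bsub>Zg m n\<^esub> x = \<one>\<^bsub>Zg m n\<^esub>" by blast
qed


lemma Zg_inv: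
  assumes "n > 0" "x \<in> carrier (Zg m n)"
  shows "inv\<^bsub>Zg m n\<^esub> x = neg n x"
proof -
  interpret group "Zg m n" using Zg_group[OF assms(1)] .
  have x: "length x = m" "\<forall>i<m. x ! i < n" "sum_list x mod n = 0"
    using assms(2) by (auto simp: Zg_def in_verts)
  have c: "neg n x \<in> carrier (Zg m n)"
    using x assms sum_neg_mod[of x n] set_lt[of x m n]
    by (auto simp: Zg_def in_verts neg_def) (metis dvd_add_left_iff mod_0_imp_dvd dvd_imp_mod_0)
  have "neg n x \<otimes>\<^bsub>Zg m n\<^esub> x = \<one>\<^bsub>Zg m n\<^esub>"
    using x neg_inv[of x m n] by (simp add: Zg_def)
  then show ?thesis using inv_equality c assms(2) by blast
qed

lemma diff_zero: "(a::nat) < n \<Longrightarrow> b < n \<Longrightarrow> (((n - a) mod n + b) mod n = 0 \<longleftrightarrow> a = b)"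
proof (cases "a = 0")
  case True
  assume "b < n" then show ?thesis using True by auto
next
  case False
  assume h: "a < n" "b < n"
  then have e: "(n - a) mod n = n - a" using False by simp
  show ?thesis
  proof
    assume "((n - a) mod n + b) mod n = 0"
    then have "n dvd (n - a + b)" using e by (simp add: mod_eq_0_iff_dvd)
    then obtain k where k: "n - a + b = n * k" by (auto simp: dvd_def)
    have "k = 1"
    proof -
      have "n * k > 0" using k h False by arith
      moreover have "n * k < n * 2" using k h by arith
      moreover have "n > 0" using h by simp
      ultimately have "k > 0" "k < 2" by (simp_all add: mult_less_cancel1 gr0I)
      then show ?thesis by simp
    qed
    then show "a = b" using k h by simp
  next
    assume "a = b" then show "((n - a) mod n + b) mod n = 0" using h e by simp
  qed
qed

lemma diff_pos: "(a::nat) < n \<Longrightarrow> b < n \<Longrightarrow> (0 < ((n - a) mod n + b) mod n \<longleftrightarrow> a \<noteq> b)"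
  using diff_zero by (simp add: gr0_conv_Suc) (metis gr0_conv_Suc neq0_conv)

lemma neg_zero: "(a::nat) < n \<Longrightarrow> ((n - a) mod n = 0 \<longleftrightarrow> a = 0)"
  by (cases "a = 0") auto

theorem lemma2:
  fixes m n :: nat
  assumes "m > 0" and "n > 0"
  shows "is_cayley_graph (CSR_verts m n) CSR_adj"
proof -
  let ?G = "Zg m n"
  define S where "S = {v \<in> CSR_verts m n. card {i. i < m \<and> v ! i \<noteq> 0} = 2}"
  interpret group ?G using Zg_group[OF assms(2)] .
  have car: "carrier ?G = CSR_verts m n" by (simp add: Zg_def)
  have conn: "cayley_conn ?G S"
    unfolding cayley_conn_def
  proof (intro conjI ballI)
    show "group ?G" by unfold_locales
    show "S \<subseteq> carrier ?G" using car S_def by auto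
    have e: "{i. i < m \<and> replicate m (0::nat) ! i \<noteq> 0} = {}" by auto
    show "\<one>\<^bsub>?G\<^esub> \<notin> S"
    proof
      assume "\<one>\<^bsub>?G\<^esub> \<in> S"
      then have "card {i. i < m \<and> replicate m (0::nat) ! i \<noteq> 0} = 2"
        unfolding S_def Zg_def by (simp only: monoid.simps mem_Collect_eq)
      then show False unfolding e by simp
    qed
  next
    fix s assume s: "s \<in> S"
    then have sc: "s \<in> carrier ?G" using car S_def by auto
    have isn: "inv\<^bsub>?G\<^esub> s = neg n s" using Zg_inv[OF assms(2) sc] .
    have ic: "inv\<^bsub>?G\<^esub> s \<in> carrier ?G" using sc by simp
    have sl: "length s = m" "\<forall>i<m. s ! i < n" using sc car by (auto simp: in_verts)
    have "{i. i < m \<and> neg n s ! i \<noteq> 0} = {i. i < m \<and> s ! i \<noteq> 0}"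
      using sl neg_zero by (auto simp: neg_def) (metis minus_nat.diff_0 mod_self gr0I)
    then show "inv\<^bsub>?G\<^esub> s \<in> S" using s ic isn car unfolding S_def by auto
  qed
  have adj: "CSR_adj x y \<longleftrightarrow> cayley_adj ?G S x y" if x: "x \<in> CSR_verts m n" and y: "y \<in> CSR_verts m n" for x y
  proof -
    have xc: "x \<in> carrier ?G" and yc: "y \<in> carrier ?G" using x y car by auto
    have xl: "length x = m" "\<forall>i<m. x ! i < n" and yl: "length y = m" "\<forall>i<m. y ! i < n"
      using x y by (auto simp: in_verts)
    have p: "inv\<^bsub>?G\<^esub> x \<otimes>\<^bsub>?G\<^esub> y \<in> carrier ?G" using xc yc by simp
    have e: "inv\<^bsub>?G\<^esub> x \<otimes>\<^bsub>?G\<^esub> y = map2 (\<lambda>a b. (a + b) mod n) (neg n x) y"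
      using Zg_inv[OF assms(2) xc] by (simp add: Zg_def)
    have "{i. i < m \<and> (inv\<^bsub>?G\<^esub> x \<otimes>\<^bsub>?G\<^esub> y) ! i \<noteq> 0} = {i. i < length x \<and> x ! i \<noteq> y ! i}"
      unfolding e
    proof (intro Collect_cong)
      fix i
      show "(i < m \<and> map2 (\<lambda>a b. (a + b) mod n) (neg n x) y ! i \<noteq> 0) = (i < length x \<and> x ! i \<noteq> y ! i)"
      proof (cases "i < m")
        case True
        then show ?thesis using xl yl diff_zero[of "x ! i" n "y ! i"] by (simp add: neg_def)
      qed (use xl in simp)
    qed
    then show ?thesis using p car unfolding CSR_adj_def cayley_adj_def S_def by auto
  qed
  have "graph_iso (CSR_verts m n) CSR_adj (carrier ?G) (cayley_adj ?G S)"
    unfolding graph_iso_def car using adj by (intro exI[of _ id]) auto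
  then show ?thesis unfolding is_cayley_graph_def using conn by blast
qed

end
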